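(* Let $\{d_i,\mathcal F_i\}_{i=1}^n$ be a martingale difference sequence. Let $v_{i-1}$ be $\mathcal F_{i-1}$-measurable random variables such that $\mathbb E[\exp(\lambda d_i)\mid\mathcal F_{i-1}]\le\exp\!\left(\frac{\lambda^2}{2}v_{i-1}\right)$ for all $\lambda>0$ and all $i\in[n]$. Define $S_n=\sum_{i=1}^n d_i$ and $V_n=\sum_{i=1}^n v_{i-1}$. Let $\delta\in(0,1)$ and suppose there are positive values $R(\delta)$ and $\alpha_1,\dots,\alpha_n$ such that $\Pr\!\left[V_n\le\sum_{i=1}^n\alpha_id_i+R(\delta)\right]\ge1-\delta$. Then for every $x>0$, \[ \Pr[S_n\ge x]\le\delta+\exp\!\left(-\frac{x^2}{4\left(\max_{i\in[n]}\alpha_i\right)x+8R(\delta)}\right). \]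
   Context: $[n]=\{1,\dots,n\}$. *)

theory Defs
  imports "HOL-Probability.Probability"
begin

definition mart_diff_seq ::
  "'a measure \<Rightarrow> (nat \<Rightarrow> 'a measure) \<Rightarrow> (nat \<Rightarrow> 'a \<Rightarrow> real) \<Rightarrow> nat \<Rightarrow> bool" where
  "mart_diff_seq M F d n \<longleftrightarrow>
     (\<forall>i\<le>n. subalgebra M (F i)) \<and>
     (\<forall>i j. i \<le> j \<longrightarrow> j \<le> n \<longrightarrow> sets (F i) \<subseteq> sets (F j)) \<and>
     (\<forall>i\<in>{1..n}. d i \<in> borel_measurable (F i) \<and> integrable M (d i) \<and>
        (AE x in M. real_cond_exp M (F (i - 1)) (d i) x = 0))"

end

theory Submission
  imports Defs
begin

lemma sfs:
  assumes "prob_space M" "subalgebra M G"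
  shows "sigma_finite_subalgebra M G"
proof -
  interpret prob_space M by fact
  have "finite_measure_subalgebra M G"
    by (simp add: finite_measure_subalgebra_def finite_measure_subalgebra_axioms_def
        finite_measure_axioms assms(2))
  then show ?thesis by (rule finite_measure_subalgebra_is_sigma_finite)
qed

lemma v_nonneg:
  assumes P: "prob_space M" and sub: "subalgebra M G"
    and gm: "integrable M g"
    and ce: "AE \<omega> in M. real_cond_exp M G g \<omega> = 0"
    and vm: "w \<in> borel_measurable G"
    and b: "AE \<omega> in M. nn_cond_exp M G (\<lambda>\<omega>. ennreal (exp (1 * g \<omega>))) \<omega>
                 \<le> ennreal (exp (1\<^sup>2 / 2 * w \<omega>))"
  shows "AE \<omega> in M. 0 \<le> w \<omega>"
proof -
  interpret prob_space M by fact
  interpret sigma_finite_subalgebra M G using sfs[OF P sub] .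
  have wM[measurable]: "w \<in> borel_measurable M" by (rule measurable_from_subalg[OF sub vm])
  have gM[measurable]: "g \<in> borel_measurable M" using gm by auto
  define A where "A = {\<omega>\<in>space M. w \<omega> < 0}"
  have sp: "space G = space M" using sub by (simp add: subalgebra_def)
  have AG: "A \<in> sets G"
  proof -
    have "A = {\<omega>\<in>space G. w \<omega> < 0}" using sp A_def by simp
    also have "\<dots> \<in> sets G" using vm by measurable
    finally show ?thesis .
  qed
  have AM[measurable]: "A \<in> sets M" unfolding A_def by measurable
  have hG: "(\<lambda>\<omega>. indicator A \<omega> :: ennreal) \<in> borel_measurable G" using AG by measurable
  have b': "AE \<omega> in M. nn_cond_exp M G (\<lambda>\<omega>. ennreal (exp (g \<omega>))) \<omega> \<le> ennreal (exp (w \<omega> / 2))"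
    using b by (simp add: power2_eq_square)
  have "(\<integral>\<^sup>+ \<omega>. indicator A \<omega> * ennreal (exp (g \<omega>)) \<partial>M)
        = (\<integral>\<^sup>+ \<omega>. indicator A \<omega> * nn_cond_exp M G (\<lambda>\<omega>. ennreal (exp (g \<omega>))) \<omega> \<partial>M)"
    by (rule nn_cond_exp_intg[symmetric]) (use hG in auto)
  also have "\<dots> \<le> (\<integral>\<^sup>+ \<omega>. indicator A \<omega> * ennreal (exp (w \<omega> / 2)) \<partial>M)"
    apply (rule nn_integral_mono_AE) using b' by eventually_elim (rule mult_left_mono, auto)
  finally have e2: "(\<integral>\<^sup>+ \<omega>. indicator A \<omega> * ennreal (exp (g \<omega>)) \<partial>M)
      \<le> (\<integral>\<^sup>+ \<omega>. indicator A \<omega> * ennreal (exp (w \<omega> / 2)) \<partial>M)" .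
  define f1 where "f1 = (\<lambda>\<omega>. indicator A \<omega> * exp (g \<omega>))"
  define f2 where "f2 = (\<lambda>\<omega>. indicator A \<omega> * exp (w \<omega> / 2))"
  have f2i: "integrable M f2"
    by (rule integrable_const_bound[where B=1]) (auto simp: f2_def A_def split: split_indicator)
  have n1: "(\<integral>\<^sup>+ \<omega>. f1 \<omega> \<partial>M) = (\<integral>\<^sup>+ \<omega>. indicator A \<omega> * ennreal (exp (g \<omega>)) \<partial>M)"
    by (rule nn_integral_cong) (auto simp: f1_def split: split_indicator)
  have n2: "(\<integral>\<^sup>+ \<omega>. f2 \<omega> \<partial>M) = (\<integral>\<^sup>+ \<omega>. indicator A \<omega> * ennreal (exp (w \<omega> / 2)) \<partial>M)"
    by (rule nn_integral_cong) (auto simp: f2_def split: split_indicator)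
  have f2n: "(\<integral>\<^sup>+ \<omega>. f2 \<omega> \<partial>M) = ennreal (integral\<^sup>L M f2)"
    by (rule nn_integral_eq_integral[OF f2i]) (auto simp: f2_def)
  have f1i: "integrable M f1"
  proof (subst integrable_iff_bounded, intro conjI)
    show "f1 \<in> borel_measurable M" unfolding f1_def by measurable
    have "(\<integral>\<^sup>+ \<omega>. ennreal (norm (f1 \<omega>)) \<partial>M) = (\<integral>\<^sup>+ \<omega>. f1 \<omega> \<partial>M)"
      by (rule nn_integral_cong) (auto simp: f1_def)
    also have "\<dots> \<le> ennreal (integral\<^sup>L M f2)" using e2 n1 n2 f2n by simp
    also have "\<dots> < \<infinity>" by simp
    finally show "(\<integral>\<^sup>+ \<omega>. ennreal (norm (f1 \<omega>)) \<partial>M) < \<infinity>" .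
  qed
  have f1n: "(\<integral>\<^sup>+ \<omega>. f1 \<omega> \<partial>M) = ennreal (integral\<^sup>L M f1)"
    by (rule nn_integral_eq_integral[OF f1i]) (auto simp: f1_def)
  have le12: "integral\<^sup>L M f1 \<le> integral\<^sup>L M f2"
  proof -
    have "ennreal (integral\<^sup>L M f1) \<le> ennreal (integral\<^sup>L M f2)"
      using e2 n1 n2 f1n f2n by simp
    moreover have "0 \<le> integral\<^sup>L M f2" by (rule integral_nonneg_AE) (auto simp: f2_def)
    ultimately show ?thesis by (simp add: ennreal_le_iff)
  qed
  have ig: "integrable M (\<lambda>\<omega>. indicator A \<omega> * g \<omega>)"
    using integrable_mult_indicator[OF AM gm] by simp
  have g0: "integral\<^sup>L M (\<lambda>\<omega>. indicator A \<omega> * g \<omega>) = 0"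
  proof -
    have "(LINT x:A|M. g x) = (LINT x:A|M. real_cond_exp M G g x)"
      by (rule real_cond_exp_intA[OF gm AG])
    also have "\<dots> = 0" unfolding set_lebesgue_integral_def
      by (rule integral_eq_zero_AE) (use ce in auto)
    finally show ?thesis by (simp add: set_lebesgue_integral_def)
  qed
  have iA: "integrable M (\<lambda>\<omega>. indicator A \<omega> :: real)"
    by (rule integrable_const_bound[where B=1]) (auto split: split_indicator)
  have "measure M A = integral\<^sup>L M (\<lambda>\<omega>. indicator A \<omega> * (1 + g \<omega>))"
    using g0 iA ig by (simp add: distrib_left)
  also have "\<dots> \<le> integral\<^sup>L M f1"
    by (rule integral_mono) (use iA ig f1i in \<open>auto simp: f1_def distrib_left split: split_indicator\<close>)
  finally have mA: "measure M A \<le> integral\<^sup>L M f2" using le12 by simp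
  define f3 where "f3 = (\<lambda>\<omega>. indicator A \<omega> * (1 - exp (w \<omega> / 2)))"
  have f3i: "integrable M f3" using iA f2i by (simp add: f3_def f2_def right_diff_distrib)
  have f3nn: "AE \<omega> in M. 0 \<le> f3 \<omega>" by (auto simp: f3_def A_def split: split_indicator)
  have "integral\<^sup>L M f3 = measure M A - integral\<^sup>L M f2"
    using iA f2i by (simp add: f3_def f2_def right_diff_distrib)
  moreover have "0 \<le> integral\<^sup>L M f3" using f3nn by (rule integral_nonneg_AE)
  ultimately have "integral\<^sup>L M f3 = 0" using mA by simp
  then have "AE \<omega> in M. f3 \<omega> = 0" using integral_nonneg_eq_0_iff_AE[OF f3i f3nn] by simp
  then show ?thesis using AE_space
    by eventually_elim (auto simp: f3_def A_def indicator_def split: if_splits)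
qed

lemma meas_mono:
  assumes "mart_diff_seq M F d n" "i \<le> j" "j \<le> n" "f \<in> borel_measurable (F i)"
  shows "f \<in> borel_measurable (F j)"
proof -
  have "subalgebra (F j) (F i)"
    using assms unfolding mart_diff_seq_def subalgebra_def by auto
  then show ?thesis using assms(4) by (rule measurable_from_subalg)
qed

lemma supermart:
  assumes P: "prob_space M" and mds: "mart_diff_seq M F d n"
    and vm: "\<And>i. i \<in> {1..n} \<Longrightarrow> v (i - 1) \<in> borel_measurable (F (i - 1))"
    and ce: "\<And>i l. i \<in> {1..n} \<Longrightarrow> l > 0 \<Longrightarrow>
          AE \<omega> in M. nn_cond_exp M (F (i - 1)) (\<lambda>\<omega>. ennreal (exp (l * d i \<omega>))) \<omega>
                       \<le> ennreal (exp (l\<^sup>2 / 2 * v (i - 1) \<omega>))"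
    and th: "\<And>i. i \<in> {1..n} \<Longrightarrow> \<theta> i > 0"
  shows "k \<le> n \<Longrightarrow>
    (\<lambda>\<omega>. exp (\<Sum>i=1..k. \<theta> i * d i \<omega> - \<theta> i ^ 2 / 2 * v (i - 1) \<omega>)) \<in> borel_measurable (F k) \<and>
    (\<integral>\<^sup>+ \<omega>. ennreal (exp (\<Sum>i=1..k. \<theta> i * d i \<omega> - \<theta> i ^ 2 / 2 * v (i - 1) \<omega>)) \<partial>M) \<le> 1"
proof (induction k)
  case 0
  interpret prob_space M by fact
  show ?case by (simp add: emeasure_space_1)
next
  case (Suc k)
  interpret prob_space M by fact
  define L where "L = (\<lambda>k \<omega>. \<Sum>i=1..k. \<theta> i * d i \<omega> - \<theta> i ^ 2 / 2 * v (i - 1) \<omega>)"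
  have IH: "(\<lambda>\<omega>. exp (L k \<omega>)) \<in> borel_measurable (F k)" "(\<integral>\<^sup>+ \<omega>. ennreal (exp (L k \<omega>)) \<partial>M) \<le> 1"
    using Suc by (auto simp: L_def)
  have subk: "subalgebra M (F k)" using mds Suc.prems unfolding mart_diff_seq_def by auto
  interpret sigma_finite_subalgebra M "F k" using sfs[OF P subk] .
  have dG: "d i \<in> borel_measurable (F j)" if "i \<in> {1..n}" "i \<le> j" "j \<le> n" for i j
    using meas_mono[OF mds that(2,3)] that mds unfolding mart_diff_seq_def by blast
  have vG: "v (i - 1) \<in> borel_measurable (F j)" if "i \<in> {1..n}" "i \<le> Suc j" "j \<le> n" for i j
    using meas_mono[OF mds _ that(3) vm[OF that(1)]] that by simp
  have Lm: "L (Suc k) \<in> borel_measurable (F (Suc k))"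
    unfolding L_def
    apply (rule borel_measurable_sum)
    apply (rule borel_measurable_diff)
     apply (rule borel_measurable_times[OF borel_measurable_const])
     apply (rule dG) using Suc.prems apply auto[3]
    apply (rule borel_measurable_times[OF borel_measurable_const])
    apply (rule vG) using Suc.prems apply auto
    done
  have m1: "(\<lambda>\<omega>. exp (L (Suc k) \<omega>)) \<in> borel_measurable (F (Suc k))"
    using Lm by measurable
  define t where "t = \<theta> (Suc k)"
  have t0: "t > 0" using th Suc.prems by (auto simp: t_def)
  define f where "f = (\<lambda>\<omega>. exp (L k \<omega> - t ^ 2 / 2 * v k \<omega>))"
  have vk: "v k \<in> borel_measurable (F k)" using vm[of "Suc k"] Suc.prems by simp
  have Lk: "L k \<in> borel_measurable (F k)"
  proof -
    have "(\<lambda>\<omega>. ln (exp (L k \<omega>))) \<in> borel_measurable (F k)" using IH(1) by measurable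
    then show ?thesis by simp
  qed
  have fm: "(\<lambda>\<omega>. ennreal (f \<omega>)) \<in> borel_measurable (F k)"
    unfolding f_def using Lk vk by measurable
  have dS: "d (Suc k) \<in> borel_measurable M"
    using mds Suc.prems unfolding mart_diff_seq_def by auto
  have "(\<integral>\<^sup>+ \<omega>. ennreal (exp (L (Suc k) \<omega>)) \<partial>M)
      = (\<integral>\<^sup>+ \<omega>. ennreal (f \<omega>) * ennreal (exp (t * d (Suc k) \<omega>)) \<partial>M)"
    by (rule nn_integral_cong)
       (simp add: L_def f_def t_def ennreal_mult''[symmetric] exp_add[symmetric])
  also have "\<dots> = (\<integral>\<^sup>+ \<omega>. ennreal (f \<omega>) * nn_cond_exp M (F k) (\<lambda>\<omega>. ennreal (exp (t * d (Suc k) \<omega>))) \<omega> \<partial>M)"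
    by (rule nn_cond_exp_intg[symmetric]) (use fm dS in auto)
  also have "\<dots> \<le> (\<integral>\<^sup>+ \<omega>. ennreal (f \<omega>) * ennreal (exp (t ^ 2 / 2 * v k \<omega>)) \<partial>M)"
  proof -
    have aeb: "AE \<omega> in M. nn_cond_exp M (F k) (\<lambda>\<omega>. ennreal (exp (t * d (Suc k) \<omega>))) \<omega>
                 \<le> ennreal (exp (t ^ 2 / 2 * v k \<omega>))"
      using ce[of "Suc k" t] t0 Suc.prems by simp
    show ?thesis
      apply (rule nn_integral_mono_AE)
      using aeb by eventually_elim (rule mult_left_mono, auto)
  qed
  also have "\<dots> = (\<integral>\<^sup>+ \<omega>. ennreal (exp (L k \<omega>)) \<partial>M)"
    by (rule nn_integral_cong)
       (simp add: f_def ennreal_mult''[symmetric] exp_add[symmetric])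
  also have "\<dots> \<le> 1" by (rule IH(2))
  finally show ?case using m1 by (simp add: L_def)
qed

lemma arith1:
  fixes a R x :: real assumes "a > 0" "R > 0" "x > 0"
  shows "x\<^sup>2 / (4 * a * x + 8 * R) \<le> x / (2*a*x + 4*R) * x - 2 * (x / (2*a*x + 4*R))\<^sup>2 * R"
proof -
  define D where "D = 2*a*x + 4*R"
  have D: "D > 0" "4 * a * x + 8 * R = 2 * D" "D \<ge> 4 * R" 
  proof -
    have "2 * a * x > 0" using assms by simp
    then show "D > 0" "D \<ge> 4 * R" unfolding D_def using assms by linarith+
    show "4 * a * x + 8 * R = 2 * D" unfolding D_def by simp
  qed
  have "x / D * x - 2 * (x / D)\<^sup>2 * R = x\<^sup>2 * (D - 2 * R) / D\<^sup>2"
    using D by (simp add: field_simps power2_eq_square)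
  also have "\<dots> \<ge> x\<^sup>2 * (D / 2) / D\<^sup>2"
    using D by (intro divide_right_mono mult_left_mono) auto
  also have "x\<^sup>2 * (D / 2) / D\<^sup>2 = x\<^sup>2 / (2 * D)"
    using D by (simp add: field_simps power2_eq_square)
  finally have "x\<^sup>2 / (2 * D) \<le> x / D * x - 2 * (x / D)\<^sup>2 * R" .
  then show ?thesis by (subst D(2)) (simp only: D_def)
qed

theorem lemmaC3:
  fixes M :: "'a measure" and F :: "nat \<Rightarrow> 'a measure"
    and d v :: "nat \<Rightarrow> 'a \<Rightarrow> real" and \<alpha> :: "nat \<Rightarrow> real"
    and n :: nat and \<delta> R x :: real
  assumes "prob_space M"
    and "mart_diff_seq M F d n"
    and "\<And>i. i \<in> {1..n} \<Longrightarrow> v (i - 1) \<in> borel_measurable (F (i - 1))"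
    and "\<And>i l. i \<in> {1..n} \<Longrightarrow> l > 0 \<Longrightarrow>
          AE \<omega> in M. nn_cond_exp M (F (i - 1)) (\<lambda>\<omega>. ennreal (exp (l * d i \<omega>))) \<omega>
                       \<le> ennreal (exp (l\<^sup>2 / 2 * v (i - 1) \<omega>))"
    and "0 < \<delta>" and "\<delta> < 1"
    and "R > 0" and "\<And>i. i \<in> {1..n} \<Longrightarrow> \<alpha> i > 0"
    and "measure M {\<omega> \<in> space M. (\<Sum>i=1..n. v (i - 1) \<omega>) \<le> (\<Sum>i=1..n. \<alpha> i * d i \<omega>) + R}
           \<ge> 1 - \<delta>"
    and "x > 0"
  shows "measure M {\<omega> \<in> space M. (\<Sum>i=1..n. d i \<omega>) \<ge> x}
           \<le> \<delta> + exp (- (x\<^sup>2 / (4 * Max (\<alpha> ` {1..n}) * x + 8 * R)))"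
proof -
  note P = assms(1) and mds = assms(2) and vm = assms(3) and ce = assms(4)
  interpret prob_space M by fact
  define Sx where "Sx = {\<omega> \<in> space M. (\<Sum>i=1..n. d i \<omega>) \<ge> x}"
  define Gs where "Gs = {\<omega> \<in> space M. (\<Sum>i=1..n. v (i - 1) \<omega>) \<le> (\<Sum>i=1..n. \<alpha> i * d i \<omega>) + R}"
  have sub: "subalgebra M (F j)" if "j \<le> n" for j using mds that unfolding mart_diff_seq_def by auto
  have dM: "d i \<in> borel_measurable M" if "i \<in> {1..n}" for i
    using mds that unfolding mart_diff_seq_def by auto
  have vM: "v (i - 1) \<in> borel_measurable M" if "i \<in> {1..n}" for i
    using measurable_from_subalg[OF sub vm[OF that]] that by auto
  have Sm: "(\<lambda>\<omega>. \<Sum>i=1..n. d i \<omega>) \<in> borel_measurable M"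
    by (rule borel_measurable_sum) (rule dM)
  have Vm: "(\<lambda>\<omega>. \<Sum>i=1..n. v (i - 1) \<omega>) \<in> borel_measurable M"
    by (rule borel_measurable_sum) (rule vM)
  have Am: "(\<lambda>\<omega>. \<Sum>i=1..n. \<alpha> i * d i \<omega>) \<in> borel_measurable M"
    by (rule borel_measurable_sum) (intro borel_measurable_times borel_measurable_const dM)
  have SxM: "Sx \<in> sets M" unfolding Sx_def using Sm by measurable
  have GsM: "Gs \<in> sets M" unfolding Gs_def using Vm Am by measurable
  have "measure M (space M - Gs) = 1 - measure M Gs" using GsM prob_compl by simp
  also have "\<dots> \<le> \<delta>" using assms(9) unfolding Gs_def by simp
  finally have mGc: "measure M (space M - Gs) \<le> \<delta>" .
  show ?thesis
  proof (cases "n = 0")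
    case True
    then have "Sx = {}" unfolding Sx_def using assms(10) by auto
    then show ?thesis using assms(5) unfolding Sx_def[symmetric]
      by (simp add: add_pos_pos)
  next
    case False
    define a where "a = Max (\<alpha> ` {1..n})"
    have aa: "\<alpha> i \<le> a" if "i \<in> {1..n}" for i unfolding a_def using that by (intro Max_ge) auto
    have a0: "a > 0" using aa[of 1] assms(8)[of 1] False by auto
    define lam where "lam = x / (2*a*x + 4*R)"
    define c where "c = 2 * lam\<^sup>2"
    define \<theta> where "\<theta> = (\<lambda>i. lam + c * \<alpha> i)"
    have axp: "2 * a * x > 0" using a0 assms(10) by simp
    have lam0: "lam > 0" unfolding lam_def using axp assms(7,10) by (intro divide_pos_pos) auto
    have c0: "c > 0" unfolding c_def using lam0 by simp
    have th0: "\<theta> i > 0" if "i \<in> {1..n}" for i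
      unfolding \<theta>_def using lam0 c0 assms(8)[OF that] by (simp add: add_pos_pos)
    have lama: "2 * lam * a \<le> 1"
    proof -
      have "2 * lam * a = 2 * a * x / (2*a*x + 4*R)" unfolding lam_def by simp
      also have "\<dots> \<le> 1" using axp assms(7) by (simp add: divide_le_eq_1)
      finally show ?thesis .
    qed
    have thc: "\<theta> i ^ 2 / 2 \<le> c" if "i \<in> {1..n}" for i
    proof -
      have "\<theta> i \<le> lam + c * a" unfolding \<theta>_def using aa[OF that] c0 by simp
      also have "lam + c * a = lam * (1 + 2 * lam * a)" unfolding c_def by (simp add: algebra_simps power2_eq_square)
      also have "\<dots> \<le> lam * 2" using lama lam0 by (intro mult_left_mono) auto
      finally have "\<theta> i \<le> 2 * lam" by simp
      then have "\<theta> i ^ 2 \<le> (2 * lam) ^ 2" using th0[OF that] by (intro power_mono) auto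
      then show ?thesis unfolding c_def by (simp add: power2_eq_square)
    qed
    define L where "L = (\<lambda>\<omega>. \<Sum>i=1..n. \<theta> i * d i \<omega> - \<theta> i ^ 2 / 2 * v (i - 1) \<omega>)"
    have SM: "(\<lambda>\<omega>. exp (L \<omega>)) \<in> borel_measurable (F n) \<and> (\<integral>\<^sup>+ \<omega>. ennreal (exp (L \<omega>)) \<partial>M) \<le> 1"
      unfolding L_def by (rule supermart[OF P mds vm ce th0]) auto
    have LM: "(\<lambda>\<omega>. exp (L \<omega>)) \<in> borel_measurable M"
      using SM measurable_from_subalg[OF sub[of n]] by auto
    have vnn: "AE \<omega> in M. \<forall>i\<in>{1..n}. 0 \<le> v (i - 1) \<omega>"
    proof (rule AE_finite_allI)
      fix i assume i: "i \<in> {1..n}"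
      have i1: "i - 1 \<le> n" using i by auto
      show "AE \<omega> in M. 0 \<le> v (i - 1) \<omega>"
        apply (rule v_nonneg[OF P sub[OF i1], where g = "d i"])
        using mds i unfolding mart_diff_seq_def apply auto[2]
        using vm[OF i] apply simp
        using ce[OF i, of 1] by simp
    qed simp
    define Nn where "Nn = (\<Union>i\<in>{1..n}. {\<omega>\<in>space M. v (i - 1) \<omega> < 0})"
    have NnM: "Nn \<in> sets M" unfolding Nn_def
    proof (rule sets.finite_UN)
      fix i assume "i \<in> {1..n}"
      then show "{\<omega>\<in>space M. v (i - 1) \<omega> < 0} \<in> sets M" using vM by measurable
    qed simp
    have NnE: "{\<omega>\<in>space M. \<not> (\<forall>i\<in>{1..n}. 0 \<le> v (i - 1) \<omega>)} = Nn"
      unfolding Nn_def by (auto simp: not_le)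
    have "emeasure M Nn = 0"
      using vnn AE_iff_measurable[OF NnM NnE] by simp
    then have mNn: "measure M Nn = 0" by (simp add: measure_def)
    define E where "E = (Sx \<inter> Gs) - Nn"
    have EM: "E \<in> sets M" unfolding E_def using SxM GsM NnM by auto
    have key: "lam * x - c * R \<le> L \<omega>" if "\<omega> \<in> E" for \<omega>
    proof -
      have S: "(\<Sum>i=1..n. d i \<omega>) \<ge> x" and G: "(\<Sum>i=1..n. v (i - 1) \<omega>) \<le> (\<Sum>i=1..n. \<alpha> i * d i \<omega>) + R"
        and vp: "\<And>i. i \<in> {1..n} \<Longrightarrow> 0 \<le> v (i - 1) \<omega>"
        using that unfolding E_def Sx_def Gs_def Nn_def by (auto simp: not_less)
      have "L \<omega> = lam * (\<Sum>i=1..n. d i \<omega>) + c * (\<Sum>i=1..n. \<alpha> i * d i \<omega>)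
                  - (\<Sum>i=1..n. \<theta> i ^ 2 / 2 * v (i - 1) \<omega>)"
        unfolding L_def \<theta>_def
        by (simp add: sum_subtractf sum.distrib sum_distrib_left algebra_simps)
      moreover have "(\<Sum>i=1..n. \<theta> i ^ 2 / 2 * v (i - 1) \<omega>) \<le> (\<Sum>i=1..n. c * v (i - 1) \<omega>)"
        by (rule sum_mono) (intro mult_right_mono thc vp; assumption)
      moreover have "(\<Sum>i=1..n. c * v (i - 1) \<omega>) = c * (\<Sum>i=1..n. v (i - 1) \<omega>)"
        by (simp add: sum_distrib_left)
      moreover have "c * (\<Sum>i=1..n. v (i - 1) \<omega>) \<le> c * ((\<Sum>i=1..n. \<alpha> i * d i \<omega>) + R)"
        using G c0 by (intro mult_left_mono) auto
      moreover have "lam * x \<le> lam * (\<Sum>i=1..n. d i \<omega>)" using S lam0 by (intro mult_left_mono) auto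
      ultimately show ?thesis by (simp add: algebra_simps)
    qed
    have "ennreal (exp (lam * x - c * R)) * emeasure M E
        = (\<integral>\<^sup>+ \<omega>. ennreal (exp (lam * x - c * R)) * indicator E \<omega> \<partial>M)"
      using EM by (simp add: nn_integral_cmult_indicator)
    also have "\<dots> \<le> (\<integral>\<^sup>+ \<omega>. ennreal (exp (L \<omega>)) \<partial>M)"
      by (rule nn_integral_mono) (auto simp: key split: split_indicator)
    also have "\<dots> \<le> 1" using SM by simp
    finally have "ennreal (exp (lam * x - c * R) * measure M E) \<le> ennreal 1"
      by (simp add: emeasure_eq_measure ennreal_mult'')
    then have "exp (lam * x - c * R) * measure M E \<le> 1" by (simp add: ennreal_le_iff)
    then have "measure M E \<le> 1 / exp (lam * x - c * R)"
      by (simp add: pos_le_divide_eq mult.commute)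
    then have mE: "measure M E \<le> exp (- (lam * x - c * R))"
      by (metis exp_minus inverse_eq_divide)
    have "x\<^sup>2 / (4 * a * x + 8 * R) \<le> lam * x - c * R"
      using arith1[OF a0 assms(7,10)] unfolding lam_def c_def by simp
    then have ex: "exp (- (lam * x - c * R)) \<le> exp (- (x\<^sup>2 / (4 * a * x + 8 * R)))" by simp
    have "Sx \<subseteq> E \<union> (space M - Gs) \<union> Nn" unfolding E_def using SxM sets.sets_into_space by auto
    then have "measure M Sx \<le> measure M (E \<union> (space M - Gs) \<union> Nn)"
      using EM GsM NnM by (intro finite_measure_mono) auto
    also have "\<dots> \<le> measure M (E \<union> (space M - Gs)) + measure M Nn"
      using EM GsM NnM by (intro measure_subadditive) (auto simp: emeasure_eq_measure)
    also have "\<dots> \<le> measure M E + measure M (space M - Gs) + measure M Nn"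
      using EM GsM NnM measure_subadditive[of E M "space M - Gs"] by (auto simp: emeasure_eq_measure)
    finally have "measure M Sx \<le> measure M E + measure M (space M - Gs)" using mNn by simp
    then show ?thesis using mE ex mGc unfolding Sx_def[symmetric] a_def[symmetric] by linarith
  qed
qed

end
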